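(* Let $4\le k\le\infty$ and let $f\colon A\to B$ be a simplicial map from a flag simplicial complex $A$ onto a flag simplicial complex $B$. Suppose that vertices $a,a'$ of $A$ are adjacent if and only if the vertices $f(a),f(a')$ are adjacent or equal. Then $A$ is $k$-large if and only if $B$ is $k$-large.
   Context: A simplicial complex is flag if every set of pairwise adjacent vertices spans a simplex. A cycle is a subcomplex that is a subdivision of the circle; it is full if every simplex spanned by its vertices lies in it. A flag complex is $k$-large if it has no full cycle of length $<k$. *)

theory Defs
  imports Main "HOL-Library.Extended_Nat"
begin

definition simplicial_complex :: "'a set set \<Rightarrow> bool" where
  "simplicial_complex K \<longleftrightarrow>
     (\<forall>\<sigma>\<in>K. finite \<sigma> \<and> \<sigma> \<noteq> {} \<and> (\<forall>\<tau>. \<tau> \<subseteq> \<sigma> \<and> \<tau> \<noteq> {} \<longrightarrow> \<tau> \<in> K))"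

definition vertices :: "'a set set \<Rightarrow> 'a set" where
  "vertices K = \<Union>K"

definition adjacent :: "'a set set \<Rightarrow> 'a \<Rightarrow> 'a \<Rightarrow> bool" where
  "adjacent K x y \<longleftrightarrow> x \<noteq> y \<and> {x, y} \<in> K"

definition flag :: "'a set set \<Rightarrow> bool" where
  "flag K \<longleftrightarrow> simplicial_complex K \<and>
     (\<forall>S. finite S \<and> S \<noteq> {} \<and> S \<subseteq> vertices K \<and>
          (\<forall>x\<in>S. \<forall>y\<in>S. x \<noteq> y \<longrightarrow> adjacent K x y) \<longrightarrow> S \<in> K)"

definition simplicial_map :: "'a set set \<Rightarrow> 'b set set \<Rightarrow> ('a \<Rightarrow> 'b) \<Rightarrow> bool" where
  "simplicial_map A B f \<longleftrightarrow> (\<forall>\<sigma>\<in>A. f ` \<sigma> \<in> B)"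

definition cycle_subcomplex :: "(nat \<Rightarrow> 'a) \<Rightarrow> nat \<Rightarrow> 'a set set" where
  "cycle_subcomplex c n =
     {{c i} | i. i < n} \<union> {{c i, c ((i + 1) mod n)} | i. i < n}"

definition is_cycle :: "'a set set \<Rightarrow> (nat \<Rightarrow> 'a) \<Rightarrow> nat \<Rightarrow> bool" where
  "is_cycle K c n \<longleftrightarrow> 3 \<le> n \<and> inj_on c {..<n} \<and> cycle_subcomplex c n \<subseteq> K"

definition full_cycle :: "'a set set \<Rightarrow> (nat \<Rightarrow> 'a) \<Rightarrow> nat \<Rightarrow> bool" where
  "full_cycle K c n \<longleftrightarrow> is_cycle K c n \<and>
     (\<forall>\<sigma>\<in>K. \<sigma> \<subseteq> c ` {..<n} \<longrightarrow> \<sigma> \<in> cycle_subcomplex c n)"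

definition k_large :: "'a set set \<Rightarrow> enat \<Rightarrow> bool" where
  "k_large K k \<longleftrightarrow> flag K \<and> \<not> (\<exists>c n. full_cycle K c n \<and> enat n < k)"

end

theory Submission
  imports Defs
begin

lemma flagD: "flag K \<Longrightarrow> finite S \<Longrightarrow> S \<noteq> {} \<Longrightarrow> S \<subseteq> vertices K \<Longrightarrow>
  (\<And>x y. x\<in>S \<Longrightarrow> y\<in>S \<Longrightarrow> x \<noteq> y \<Longrightarrow> adjacent K x y) \<Longrightarrow> S \<in> K"
  unfolding flag_def by blast

lemma modsuc2: "(i::nat) < n \<Longrightarrow> ((i+1) mod n = 0 \<and> i+1 = n) \<or> ((i+1) mod n = i+1 \<and> i+1 < n)"
  by (metis Suc_eq_plus1 Suc_lessI mod_less mod_self)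
lemma arith34:
  assumes "(i::nat)<n" "4\<le>n"
  shows "i \<noteq> ((((i+1) mod n)+1) mod n + 1) mod n"
    "((i+1) mod n + 1) mod n \<noteq> i" "((i+1) mod n + 1) mod n \<noteq> (i+1) mod n"
proof -
  define j where "j = (i+1) mod n"
  define m where "m = (j+1) mod n"
  define l where "l = (m+1) mod n"
  have "j < n" "m < n" using assms unfolding j_def m_def by auto
  note a = modsuc2[OF assms(1)] modsuc2[OF \<open>j<n\<close>] modsuc2[OF \<open>m<n\<close>]
  have "i \<noteq> l" "m \<noteq> i" "m \<noteq> j" using a assms unfolding j_def[symmetric] m_def[symmetric] l_def[symmetric] by linarith+
  then show "i \<noteq> ((((i+1) mod n)+1) mod n + 1) mod n"
    "((i+1) mod n + 1) mod n \<noteq> i" "((i+1) mod n + 1) mod n \<noteq> (i+1) mod n"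
    unfolding j_def m_def l_def by auto
qed

lemma cyc_of: "(\<exists>i<n. J={i}) \<or> (\<exists>i<n. J={i,(i+1) mod n}) \<Longrightarrow> g ` J \<in> cycle_subcomplex g n"
  unfolding cycle_subcomplex_def by auto

lemma card_2_le: "card {a, b} \<le> 2"
  by (cases "a = b") auto

lemma sc_sub: "simplicial_complex K \<Longrightarrow> \<sigma> \<in> K \<Longrightarrow> \<tau> \<subseteq> \<sigma> \<Longrightarrow> \<tau> \<noteq> {} \<Longrightarrow> \<tau> \<in> K"
  unfolding simplicial_complex_def by blast

lemma modsuc: "(i::nat) < n \<Longrightarrow> (i+1) mod n = (if i+1 = n then 0 else i+1)"
  by auto

lemma cyc_mem: "x \<in> cycle_subcomplex c n \<longleftrightarrow>
   (\<exists>i<n. x = {c i}) \<or> (\<exists>i<n. x = {c i, c ((i+1) mod n)})"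
  unfolding cycle_subcomplex_def by blast

lemma cyc_image:
  assumes "inj_on c {..<n}" "J \<subseteq> {..<n}" "c ` J \<in> cycle_subcomplex c n" "0 < n"
  shows "(\<exists>i<n. J={i}) \<or> (\<exists>i<n. J = {i,(i+1) mod n})"
proof -
  from assms(3) consider i where "i<n" "c ` J = c ` {i}"
    | i where "i<n" "c ` J = c ` {i, (i+1) mod n}" unfolding cyc_mem by auto
  then show ?thesis
  proof cases
    case 1
    have s1: "{i} \<subseteq> {..<n}" using 1 by simp
    show ?thesis using iffD1[OF inj_on_image_eq_iff[OF assms(1) assms(2) s1] 1(2)] 1(1) by blast
  next
    case 2
    have "(i+1) mod n < n" using assms(4) by simp
    then have s1: "{i, (i+1) mod n} \<subseteq> {..<n}" using 2 by simp
    show ?thesis using iffD1[OF inj_on_image_eq_iff[OF assms(1) assms(2) s1] 2(2)] 2(1) by blast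
  qed
qed

lemma full_edge:
  assumes "full_cycle K c n" "i<n" "j<n" "i\<noteq>j" "{c i, c j} \<in> K"
  shows "j = (i+1) mod n \<or> i = (j+1) mod n"
proof -
  have inj: "inj_on c {..<n}" and n3: "3 \<le> n" using assms(1) unfolding full_cycle_def is_cycle_def by auto
  have s: "{i,j} \<subseteq> {..<n}" using assms(2,3) by simp
  have sub: "c ` {i,j} \<subseteq> c ` {..<n}" using s by (rule image_mono)
  have "c ` {i,j} \<in> K" using assms(5) by simp
  then have "c ` {i,j} \<in> cycle_subcomplex c n" using assms(1) sub unfolding full_cycle_def by blast
  from cyc_image[OF inj s this] n3
  have "(\<exists>m<n. {i,j}={m}) \<or> (\<exists>m<n. {i,j} = {m,(m+1) mod n})" by simp
  moreover have "\<not> (\<exists>m<n. {i,j}={m})"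
  proof
    assume "\<exists>m<n. {i,j}={m}"
    then obtain m where "{i,j} = {m}" by blast
    then have "i \<in> {m}" "j \<in> {m}" by (metis insertI1, metis insertI1 insert_commute)
    then show False using assms(4) by simp
  qed
  ultimately obtain m where m: "{i,j} = {m, (m+1) mod n}" by blast
  then have "(i = m \<and> j = (m+1) mod n) \<or> (i = (m+1) mod n \<and> j = m)"
    by (simp only: doubleton_eq_iff)
  then show ?thesis by blast
qed

lemma full_adj:
  assumes "full_cycle K c n" "i<n" "j<n" "i\<noteq>j"
  shows "adjacent K (c i) (c j) \<longleftrightarrow> (j = (i+1) mod n \<or> i = (j+1) mod n)"
proof
  assume "adjacent K (c i) (c j)"
  then have "{c i, c j} \<in> K" unfolding adjacent_def by blast
  then show "j = (i+1) mod n \<or> i = (j+1) mod n" using full_edge[OF assms] by blast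
next
  have inj: "inj_on c {..<n}" and sub: "cycle_subcomplex c n \<subseteq> K"
    using assms(1) unfolding full_cycle_def is_cycle_def by auto
  have ne: "c i \<noteq> c j" using inj assms(2,3,4) by (auto dest: inj_onD)
  assume "j = (i+1) mod n \<or> i = (j+1) mod n"
  then have "{c i, c j} \<in> cycle_subcomplex c n"
  proof
    assume "j = (i+1) mod n"
    then have "{c i, c j} = {c i, c ((i+1) mod n)}" by simp
    then show ?thesis unfolding cycle_subcomplex_def using assms(2) by blast
  next
    assume "i = (j+1) mod n"
    then have "{c i, c j} = {c j, c ((j+1) mod n)}" by (simp add: insert_commute)
    then show ?thesis unfolding cycle_subcomplex_def using assms(3) by blast
  qed
  then show "adjacent K (c i) (c j)" using sub ne unfolding adjacent_def by blast
qed

lemma flag_full_ge4: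
  assumes "flag K" "full_cycle K c n"
  shows "4 \<le> n"
proof (rule ccontr)
  assume "\<not> 4 \<le> n"
  moreover have n3: "3 \<le> n" and inj: "inj_on c {..<n}" and sub: "cycle_subcomplex c n \<subseteq> K"
    using assms(2) unfolding full_cycle_def is_cycle_def by auto
  ultimately have n: "n = 3" by simp
  have sc: "simplicial_complex K" using assms(1) unfolding flag_def by (rule conjunct1)
  have vert: "c i \<in> vertices K" if "i<n" for i
    using sub that unfolding vertices_def cycle_subcomplex_def by blast
  have c0: "c 0 \<in> c ` {..<n}" using n by simp
  have ne: "c ` {..<n} \<noteq> {}" using c0 by (metis empty_iff)
  have "c ` {..<n} \<in> K"
  proof (rule flagD[OF assms(1)])
    show "finite (c ` {..<n})" by simp
    show "c ` {..<n} \<noteq> {}" by (rule ne)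
    show "c ` {..<n} \<subseteq> vertices K" using vert by auto
    fix x y assume "x \<in> c ` {..<n}" "y \<in> c ` {..<n}" "x \<noteq> y"
    then obtain i j where ij: "i<n" "j<n" "x = c i" "y = c j" "i\<noteq>j" by auto
    have "i \<in> {0,1,2}" "j \<in> {0,1,2}" using ij(1,2) n by auto
    then have "j = (i+1) mod 3 \<or> i = (j+1) mod 3" using ij(5) by auto
    then have "j = (i+1) mod n \<or> i = (j+1) mod n" using n by simp
    then show "adjacent K x y" using full_adj[OF assms(2) ij(1,2,5)] ij(3,4) by simp
  qed
  then have "c ` {..<n} \<in> cycle_subcomplex c n" using assms(2) unfolding full_cycle_def by blast
  from cyc_image[OF inj _ this]
  have "(\<exists>m<n. {..<n}={m}) \<or> (\<exists>m<n. {..<n} = {m,(m+1) mod n})" using n by simp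
  then have "card {..<n} \<le> 2"
  proof
    assume "\<exists>m<n. {..<n}={m}"
    then obtain m where "{..<n}={m}" by blast
    then have "card {..<n} = card {m}" by (rule arg_cong)
    then show ?thesis by simp
  next
    assume "\<exists>m<n. {..<n} = {m,(m+1) mod n}"
    then obtain m where "{..<n} = {m,(m+1) mod n}" by blast
    then have "card {..<n} = card {m,(m+1) mod n}" by (rule arg_cong)
    moreover have "card {m,(m+1) mod n} \<le> 2" by (rule card_2_le) 
    ultimately show ?thesis by linarith
  qed
  moreover have "card {..<n} = 3" using n by simp
  ultimately show False by linarith
qed

theorem lemma2p5:
  fixes A :: "'a set set" and B :: "'b set set" and f :: "'a \<Rightarrow> 'b" and k :: enat
  assumes "4 \<le> k"
    and "flag A" and "flag B"
    and "simplicial_map A B f"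
    and "B = (\<lambda>\<sigma>. f ` \<sigma>) ` A"
    and "\<forall>a\<in>vertices A. \<forall>a'\<in>vertices A. a \<noteq> a' \<longrightarrow>
           (adjacent A a a' \<longleftrightarrow> adjacent B (f a) (f a') \<or> f a = f a')"
  shows "k_large A k \<longleftrightarrow> k_large B k"
proof -
  have scA: "simplicial_complex A" using assms(2) unfolding flag_def by (rule conjunct1)
  have scB: "simplicial_complex B" using assms(3) unfolding flag_def by (rule conjunct1)
  have AtoB: "\<exists>c n. full_cycle A c n \<and> enat n < k" if "full_cycle B c n" "enat n < k" for c n
  proof -
    have inj: "inj_on c {..<n}" and sub: "cycle_subcomplex c n \<subseteq> B" and n3: "3 \<le> n"
      using that(1) unfolding full_cycle_def is_cycle_def by auto
    have "\<exists>a. a \<in> vertices A \<and> f a = c i" if "i<n" for i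
    proof -
      have "{c i} \<in> B" using sub that unfolding cycle_subcomplex_def by blast
      then obtain \<sigma> where "\<sigma> \<in> A" "{c i} = f ` \<sigma>" using assms(5) by auto
      then show ?thesis unfolding vertices_def by (metis UnionI imageE insertI1)
    qed
    then obtain a where a: "\<And>i. i<n \<Longrightarrow> a i \<in> vertices A \<and> f (a i) = c i" by metis
    have fa: "f ` (a ` J) = c ` J" if "J \<subseteq> {..<n}" for J
      using a that by (force simp: image_image)
    have ainj: "inj_on a {..<n}"
    proof (rule inj_onI)
      fix x y assume xy: "x \<in> {..<n}" "y \<in> {..<n}" "a x = a y"
      then have "c x = c y" using a[of x] a[of y] by auto
      then show "x = y" using inj xy by (auto dest: inj_onD)
    qed
    have asing: "{a i} \<in> A" if il: "i<n" for i
    proof -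
      obtain \<sigma> where "\<sigma> \<in> A" "a i \<in> \<sigma>" using a[OF il] unfolding vertices_def by blast
      then show ?thesis using sc_sub[OF scA] by blast
    qed
    have "full_cycle A a n"
      unfolding full_cycle_def is_cycle_def
    proof (intro conjI ballI impI)
      show "3 \<le> n" "inj_on a {..<n}" by fact+
      show "cycle_subcomplex a n \<subseteq> A"
      proof
        fix x assume "x \<in> cycle_subcomplex a n"
        then consider i where "i<n" "x = {a i}" | i where "i<n" "x = {a i, a ((i+1) mod n)}"
          unfolding cyc_mem by auto
        then show "x \<in> A"
        proof cases
          case 1 then show ?thesis using asing by auto
        next
          case 2
          let ?j = "(i+1) mod n"
          have j: "?j < n" "?j \<noteq> i" using 2 n3 modsuc2[of i n] by auto
          have "{c i, c ?j} \<in> B" using sub 2 unfolding cycle_subcomplex_def by blast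
          moreover have ne: "c i \<noteq> c ?j" using inj j 2 by (auto dest: inj_onD)
          moreover have fe: "f (a i) = c i" "f (a ?j) = c ?j" using a 2 j by auto
          ultimately have adj: "adjacent B (f (a i)) (f (a ?j))" unfolding adjacent_def by simp
          have ane: "a i \<noteq> a ?j" using ne fe by auto
          have "a i \<in> vertices A" "a ?j \<in> vertices A" using a 2 j by auto
          then have "adjacent A (a i) (a ?j) \<longleftrightarrow> adjacent B (f (a i)) (f (a ?j)) \<or> f (a i) = f (a ?j)"
            using assms(6) ane by blast
          then have "adjacent A (a i) (a ?j)" using adj by blast
          then show ?thesis using 2 unfolding adjacent_def by auto
        qed
      qed
      fix \<sigma> assume "\<sigma> \<in> A" "\<sigma> \<subseteq> a ` {..<n}"
      define J where "J = {j. j<n \<and> a j \<in> \<sigma>}"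
      have sJ: "\<sigma> = a ` J" using \<open>\<sigma> \<subseteq> _\<close> unfolding J_def by auto
      have J: "J \<subseteq> {..<n}" unfolding J_def by auto
      have "f ` \<sigma> \<in> B" using assms(4) \<open>\<sigma> \<in> A\<close> unfolding simplicial_map_def by auto
      moreover have "f ` \<sigma> = c ` J" using sJ fa[OF J] by simp
      ultimately have cJ: "c ` J \<in> B" by simp
      have csub: "c ` J \<subseteq> c ` {..<n}" using J by (rule image_mono)
      have full: "\<forall>\<sigma>\<in>B. \<sigma> \<subseteq> c ` {..<n} \<longrightarrow> \<sigma> \<in> cycle_subcomplex c n"
        using that(1) unfolding full_cycle_def by (rule conjunct2)
      have "c ` J \<in> cycle_subcomplex c n" using full cJ csub by blast
      from cyc_image[OF inj J this] n3
      have "(\<exists>i<n. J={i}) \<or> (\<exists>i<n. J={i,(i+1) mod n})" by simp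
      then show "\<sigma> \<in> cycle_subcomplex a n" unfolding sJ by (rule cyc_of)
    qed
    then show ?thesis using that by blast
  qed
  have BtoA: "\<exists>c n. full_cycle B c n \<and> enat n < k" if "full_cycle A c n" "enat n < k" for c n
  proof -
    have fc: "full_cycle A c n" using that(1) .
    have inj: "inj_on c {..<n}" and sub: "cycle_subcomplex c n \<subseteq> A" and n3: "3 \<le> n"
      using that(1) unfolding full_cycle_def is_cycle_def by auto
    have n4: "4 \<le> n" using flag_full_ge4[OF assms(2) that(1)] .
    have vert: "c i \<in> vertices A" if "i<n" for i
      using sub that unfolding vertices_def cycle_subcomplex_def by blast
    have cne: "c i \<noteq> c j" if "i<n" "j<n" "i\<noteq>j" for i j
      using inj that by (auto dest: inj_onD)
    have adjeq: "adjacent A (c i) (c j) \<longleftrightarrow> adjacent B (f (c i)) (f (c j)) \<or> f (c i) = f (c j)"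
      if "i<n" "j<n" "i\<noteq>j" for i j
      using assms(6) vert that cne by blast
    have finj: "inj_on (f \<circ> c) {..<n}"
    proof (rule inj_onI, rule ccontr)
      fix i j assume i: "i \<in> {..<n}" and j: "j \<in> {..<n}" and eq: "(f \<circ> c) i = (f \<circ> c) j" and ij: "i \<noteq> j"
      have cons: "\<And>i j. i<n \<Longrightarrow> j<n \<Longrightarrow> i\<noteq>j \<Longrightarrow> f (c i) = f (c j) \<Longrightarrow> False"
      proof -
        fix i j assume i: "i<n" and j: "j<n" and ij: "i\<noteq>j" and eq: "f (c i) = f (c j)"
        have "adjacent A (c i) (c j)" using adjeq[OF i j ij] eq by simp
        then have "j = (i+1) mod n \<or> i = (j+1) mod n" using full_adj[OF fc i j ij] by simp
        moreover
        have key: "False" if i: "i<n" and j: "j<n" and jdef: "j = (i+1) mod n" and eq: "f (c i) = f (c j)" for i j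
        proof -
          let ?m = "(j+1) mod n"
          have m: "?m < n" using n4 by simp
          have mi: "?m \<noteq> i" "?m \<noteq> j" using arith34[OF i n4] jdef by auto
          have "adjacent A (c ?m) (c j)" using full_adj[OF fc m j mi(2)] by simp
          then have "adjacent B (f (c ?m)) (f (c i)) \<or> f (c ?m) = f (c i)"
            using adjeq[OF m j mi(2)] eq by simp
          then have "adjacent A (c ?m) (c i)" using adjeq[OF m i mi(1)] by simp
          then have "i = (?m+1) mod n \<or> ?m = (i+1) mod n" using full_adj[OF fc m i mi(1)] by simp
          then show False using arith34[OF i n4] jdef mi(2) by metis

        qed
        ultimately show False using key[OF i j] key[OF j i] eq by metis
      qed
      show False using cons i j ij eq by auto
    qed
    have "full_cycle B (f \<circ> c) n"
      unfolding full_cycle_def is_cycle_def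
    proof (intro conjI ballI impI)
      show "3 \<le> n" "inj_on (f \<circ> c) {..<n}" by fact+
      show "cycle_subcomplex (f \<circ> c) n \<subseteq> B"
      proof
        fix x assume "x \<in> cycle_subcomplex (f \<circ> c) n"
        then consider i where "i<n" "x = f ` {c i}" | i where "i<n" "x = f ` {c i, c ((i+1) mod n)}"
          unfolding cyc_mem by auto
        then show "x \<in> B"
        proof cases
          case 1
          then have "{c i} \<in> A" using sub unfolding cycle_subcomplex_def by blast
          then show ?thesis using 1 assms(4) unfolding simplicial_map_def by auto
        next
          case 2
          then have "{c i, c ((i+1) mod n)} \<in> A" using sub unfolding cycle_subcomplex_def by blast
          then show ?thesis using 2 assms(4) unfolding simplicial_map_def by auto
        qed
      qed
      fix \<sigma> assume "\<sigma> \<in> B" "\<sigma> \<subseteq> (f \<circ> c) ` {..<n}"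
      define J where "J = {j. j<n \<and> f (c j) \<in> \<sigma>}"
      have sJ: "\<sigma> = (f \<circ> c) ` J" using \<open>\<sigma> \<subseteq> _\<close> unfolding J_def by auto
      have J: "J \<subseteq> {..<n}" unfolding J_def by auto
      have "\<sigma> \<noteq> {}" using scB \<open>\<sigma> \<in> B\<close> unfolding simplicial_complex_def by auto
      have "c ` J \<in> A"
      proof (rule flagD[OF assms(2)])
        show "finite (c ` J)" using J finite_subset by (metis finite_imageI finite_lessThan)
        show "c ` J \<noteq> {}" using sJ \<open>\<sigma> \<noteq> {}\<close> by auto
        show "c ` J \<subseteq> vertices A" using vert J by auto
          fix x y assume "x \<in> c ` J" "y \<in> c ` J" "x \<noteq> y"
          then obtain i j where ij: "i\<in>J" "j\<in>J" "x = c i" "y = c j" "i\<noteq>j" by auto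
          have lt: "i<n" "j<n" using ij J by auto
          have "f (c i) \<in> \<sigma>" "f (c j) \<in> \<sigma>" using ij unfolding J_def by auto
          then have "{f (c i), f (c j)} \<subseteq> \<sigma>" by blast
          then have "{f (c i), f (c j)} \<in> B" using sc_sub[OF scB \<open>\<sigma> \<in> B\<close>] by blast
          then have "adjacent B (f (c i)) (f (c j)) \<or> f (c i) = f (c j)"
            unfolding adjacent_def by auto
          then show "adjacent A x y" using adjeq[OF lt ij(5)] ij by simp
      qed
      then have cJ: "c ` J \<in> A" .
      have csub: "c ` J \<subseteq> c ` {..<n}" using J by (rule image_mono)
      have full: "\<forall>\<sigma>\<in>A. \<sigma> \<subseteq> c ` {..<n} \<longrightarrow> \<sigma> \<in> cycle_subcomplex c n"
        using fc unfolding full_cycle_def by (rule conjunct2)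
      have "c ` J \<in> cycle_subcomplex c n" using full cJ csub by blast
      from cyc_image[OF inj J this] n3
      have "(\<exists>i<n. J={i}) \<or> (\<exists>i<n. J={i,(i+1) mod n})" by simp
      then show "\<sigma> \<in> cycle_subcomplex (f \<circ> c) n" unfolding sJ by (rule cyc_of)
    qed
    then show ?thesis using that by blast
  qed
  show ?thesis unfolding k_large_def using assms(2,3) AtoB BtoA by blast
qed

end
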